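(* Let $G$ be a two-player game (players White and Black) with a finite set $\mathcal{P}$ of positions, in which every non-terminal position has at least one White option and at least one Black option, and in which each terminal position is designated as won by White or won by Black. Let $\alpha_n$, $\beta_n$, $\alpha$, $\beta$ be defined as in the context. Then for every position $P\in\mathcal{P}$, the numbers $\alpha(P)$ and $\beta(P)$ are rational.
   Context: The game is given by a finite set $\mathcal{P}$ of positions; each position $P$ has a set of White options and a set of Black options (positions $P_w$, resp. $P_b$, to which White, resp. Black, can move from $P$). Some positions are terminal, each designated as a White win or a Black win. Define $\alpha_n,\beta_n:\mathcal{P}\to[0,1]$ for $n\ge 0$ by: for every $n$, $\alpha_n(P)=\beta_n(P)=1$ if $P$ is a terminal White win and $\alpha_n(P)=\beta_n(P)=0$ if $P$ is a terminal Black win; for non-terminal $P$, $\alpha_0(P)=0$, $\beta_0(P)=1$, and $$\alpha_{n+1}(P)=\tfrac12\Big(\max_w \alpha_n(P_w)+\min_b \alpha_n(P_b)\Big),\qquad \beta_{n+1}(P)=\tfrac12\Big(\max_w \beta_n(P_w)+\min_b \beta_n(P_b)\Big),$$ where $w$ ranges over White options and $b$ over Black options of $P$. The sequence $\alpha_n(P)$ is nondecreasing and $\beta_n(P)$ is nonincreasing; set $\alpha(P)=\lim_n\alpha_n(P)$ and $\beta(P)=\lim_n\beta_n(P)$. (In the bidding interpretation with total money $1$, $\alpha(P)$ is the threshold of Black's bankroll below which White can force a win, and $\beta(P)$ the amount Black needs to force a win; in the random-turn interpretation with a fair coin deciding who moves, they are White's optimal probabilities of winning and of not losing.) *)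

theory Defs
  imports Complex_Main
begin

text \<open>A game: terminal predicate T, predicate Wwin (terminal White win; otherwise a
terminal position is a Black win), White options Wo and Black options Bo.
game_iter c n p is alpha_n (for c = 0) and beta_n (for c = 1).\<close>

fun game_iter :: "real \<Rightarrow> ('p \<Rightarrow> bool) \<Rightarrow> ('p \<Rightarrow> bool) \<Rightarrow> ('p \<Rightarrow> 'p set) \<Rightarrow> ('p \<Rightarrow> 'p set)
                  \<Rightarrow> nat \<Rightarrow> 'p \<Rightarrow> real" where
  "game_iter c T Wwin Wo Bo 0 p =
     (if T p then (if Wwin p then 1 else 0) else c)"
| "game_iter c T Wwin Wo Bo (Suc n) p =
     (if T p then (if Wwin p then 1 else 0)
      else (Max (game_iter c T Wwin Wo Bo n ` Wo p) + Min (game_iter c T Wwin Wo Bo n ` Bo p)) / 2)"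

definition alpha_n :: "('p \<Rightarrow> bool) \<Rightarrow> ('p \<Rightarrow> bool) \<Rightarrow> ('p \<Rightarrow> 'p set) \<Rightarrow> ('p \<Rightarrow> 'p set) \<Rightarrow> nat \<Rightarrow> 'p \<Rightarrow> real" where
  "alpha_n T Wwin Wo Bo n p = game_iter 0 T Wwin Wo Bo n p"

definition beta_n :: "('p \<Rightarrow> bool) \<Rightarrow> ('p \<Rightarrow> bool) \<Rightarrow> ('p \<Rightarrow> 'p set) \<Rightarrow> ('p \<Rightarrow> 'p set) \<Rightarrow> nat \<Rightarrow> 'p \<Rightarrow> real" where
  "beta_n T Wwin Wo Bo n p = game_iter 1 T Wwin Wo Bo n p"

definition alpha :: "('p \<Rightarrow> bool) \<Rightarrow> ('p \<Rightarrow> bool) \<Rightarrow> ('p \<Rightarrow> 'p set) \<Rightarrow> ('p \<Rightarrow> 'p set) \<Rightarrow> 'p \<Rightarrow> real" where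
  "alpha T Wwin Wo Bo p = lim (\<lambda>n. alpha_n T Wwin Wo Bo n p)"

definition beta :: "('p \<Rightarrow> bool) \<Rightarrow> ('p \<Rightarrow> bool) \<Rightarrow> ('p \<Rightarrow> 'p set) \<Rightarrow> ('p \<Rightarrow> 'p set) \<Rightarrow> 'p \<Rightarrow> real" where
  "beta T Wwin Wo Bo p = lim (\<lambda>n. beta_n T Wwin Wo Bo n p)"

end

theory Submission imports Defs begin

interpretation rv: vector_space "\<lambda>q (x::real). of_rat q * x"
  by unfold_locales (auto simp: algebra_simps of_rat_add of_rat_mult)

interpretation rvp: vector_space_pair "\<lambda>q (x::real). of_rat q * x" "\<lambda>q (x::real). of_rat q * x" ..

lemma exists_psi:
  fixes a :: real assumes "a \<notin> \<rat>"
  shows "\<exists>\<psi>::real\<Rightarrow>real. (\<forall>x y. \<psi> (x + y) = \<psi> x + \<psi> y) \<and>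
     (\<forall>q x. \<psi> (of_rat q * x) = of_rat q * \<psi> x) \<and> \<psi> 1 = 0 \<and> \<psi> a = 1"
proof -
  have a1: "a \<noteq> 1" using assms by auto
  have "1 \<notin> rv.span {}" by simp
  then have i1: "rv.independent {1::real}" using rv.independent_insertI[of 1 "{}"] by auto
  have "a \<notin> rv.span {1}" using assms unfolding rv.span_singleton by (auto simp: Rats_def)
  then have iB: "rv.independent {a, 1}" using rv.independent_insertI[OF _ i1] by auto
  define \<psi> where "\<psi> = rvp.construct {a, 1} (\<lambda>x. if x = 1 then 0 else 1)"
  have lin: "Vector_Spaces.linear (\<lambda>q (x::real). of_rat q * x) (\<lambda>q (x::real). of_rat q * x) \<psi>"
    unfolding \<psi>_def by (rule rvp.linear_construct[OF iB])
  show ?thesis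
  proof (intro exI conjI allI)
    show "\<psi> (x + y) = \<psi> x + \<psi> y" for x y using rvp.linear_add[OF lin] by simp
    show "\<psi> (of_rat q * x) = of_rat q * \<psi> x" for q x using rvp.linear_scale[OF lin] by simp
    show "\<psi> 1 = 0" unfolding \<psi>_def using rvp.construct_basis[OF iB, of 1] by simp
    show "\<psi> a = 1" unfolding \<psi>_def using rvp.construct_basis[OF iB, of a] a1 by simp
  qed
qed

lemma gi_T: "T p \<Longrightarrow> game_iter c T Wwin Wo Bo n p = (if Wwin p then 1 else 0)"
  by (cases n) (simp_all only: game_iter.simps if_True)
lemma gi_0F: "\<not> T p \<Longrightarrow> game_iter c T Wwin Wo Bo 0 p = c"
  by (simp only: game_iter.simps if_False)
lemma gi_SF: "\<not> T p \<Longrightarrow> game_iter c T Wwin Wo Bo (Suc n) p =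
   (Max (game_iter c T Wwin Wo Bo n ` Wo p) + Min (game_iter c T Wwin Wo Bo n ` Bo p)) / 2"
  by (simp only: game_iter.simps if_False)
declare game_iter.simps[simp del]

lemma half_add_mono: "(x::real) \<le> y \<Longrightarrow> z \<le> w \<Longrightarrow> c = (x + z) / 2 \<Longrightarrow> c \<le> (y + w) / 2"
  by simp

lemma Max_mono_fun:
  assumes "finite A" "A \<noteq> {}" "\<And>x. x \<in> A \<Longrightarrow> f x \<le> (g x :: real)"
  shows "Max (f ` A) \<le> Max (g ` A)"
proof -
  have "Max (f ` A) \<in> f ` A" using assms by (intro Max_in) auto
  then obtain w where "w \<in> A" "Max (f ` A) = f w" by auto
  moreover have "g w \<le> Max (g ` A)" using assms \<open>w \<in> A\<close> by auto
  ultimately show ?thesis using assms(3)[of w] by auto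
qed

lemma Min_mono_fun:
  assumes "finite A" "A \<noteq> {}" "\<And>x. x \<in> A \<Longrightarrow> f x \<le> (g x :: real)"
  shows "Min (f ` A) \<le> Min (g ` A)"
proof -
  have "Min (g ` A) \<in> g ` A" using assms by (intro Min_in) auto
  then obtain w where "w \<in> A" "Min (g ` A) = g w" by auto
  moreover have "Min (f ` A) \<le> f w" using assms \<open>w \<in> A\<close> by auto
  ultimately show ?thesis using assms(3)[of w] by auto
qed

lemma tendsto_Max_finite:
  assumes "finite A" "A \<noteq> {}" "\<And>x. x \<in> A \<Longrightarrow> ((\<lambda>n. f n x) \<longlongrightarrow> (g x :: real)) F"
  shows "((\<lambda>n. Max (f n ` A)) \<longlongrightarrow> Max (g ` A)) F"
  using assms
proof (induction A rule: finite_ne_induct)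
  case (singleton x) then show ?case by simp
next
  case (insert x A)
  then show ?case by (simp add: Max_insert tendsto_max)
qed

lemma tendsto_Min_finite:
  assumes "finite A" "A \<noteq> {}" "\<And>x. x \<in> A \<Longrightarrow> ((\<lambda>n. f n x) \<longlongrightarrow> (g x :: real)) F"
  shows "((\<lambda>n. Min (f n ` A)) \<longlongrightarrow> Min (g ` A)) F"
  using assms
proof (induction A rule: finite_ne_induct)
  case (singleton x) then show ?case by simp
next
  case (insert x A)
  then show ?case by (simp add: Min_insert tendsto_min)
qed

lemma Max_one_minus:
  assumes "finite A" "A \<noteq> {}"
  shows "Max ((\<lambda>x. 1 - f x) ` A) = 1 - Min (f ` A :: real set)"
proof -
  have "Min (f ` A) \<in> f ` A" using assms by (intro Min_in) auto
  then obtain m where m: "m \<in> A" "Min (f ` A) = f m" by auto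
  show ?thesis
  proof (rule Max_eqI)
    show "y \<le> 1 - Min (f ` A)" if "y \<in> (\<lambda>x. 1 - f x) ` A" for y
      using that assms by auto
  qed (use assms m in auto)
qed

lemma Min_one_minus:
  assumes "finite A" "A \<noteq> {}"
  shows "Min ((\<lambda>x. 1 - f x) ` A) = 1 - Max (f ` A :: real set)"
proof -
  have "Max (f ` A) \<in> f ` A" using assms by (intro Max_in) auto
  then obtain m where m: "m \<in> A" "Max (f ` A) = f m" by auto
  show ?thesis
  proof (rule Min_eqI)
    show "1 - Max (f ` A) \<le> y" if "y \<in> (\<lambda>x. 1 - f x) ` A" for y
      using that assms by auto
  qed (use assms m in auto)
qed

locale game =
  fixes Pos :: "'p set" and T Wwin :: "'p \<Rightarrow> bool" and Wo Bo :: "'p \<Rightarrow> 'p set"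
  assumes fin: "finite Pos"
    and Wsub: "\<And>p. p \<in> Pos \<Longrightarrow> Wo p \<subseteq> Pos"
    and Bsub: "\<And>p. p \<in> Pos \<Longrightarrow> Bo p \<subseteq> Pos"
    and Wne: "\<And>p. p \<in> Pos \<Longrightarrow> \<not> T p \<Longrightarrow> Wo p \<noteq> {}"
    and Bne: "\<And>p. p \<in> Pos \<Longrightarrow> \<not> T p \<Longrightarrow> Bo p \<noteq> {}"
begin

abbreviation a where "a n p \<equiv> game_iter 0 T Wwin Wo Bo n p"
definition v where "v p = lim (\<lambda>n. a n p)"

lemma finW: "p \<in> Pos \<Longrightarrow> finite (Wo p)" using Wsub fin finite_subset by blast
lemma finB: "p \<in> Pos \<Longrightarrow> finite (Bo p)" using Bsub fin finite_subset by blast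

lemma a_bounds: "p \<in> Pos \<Longrightarrow> 0 \<le> a n p \<and> a n p \<le> 1"
proof (induction n arbitrary: p)
  case 0 then show ?case by (cases "T p") (simp_all add: gi_T gi_0F)
next
  case (Suc n)
  show ?case
  proof (cases "T p")
    case False
    have "Max (a n ` Wo p) \<in> a n ` Wo p"
      using finW[OF Suc.prems] Wne[OF Suc.prems False] by (intro Max_in) auto
    then obtain w where w: "w \<in> Wo p" "Max (a n ` Wo p) = a n w" by auto
    have "Min (a n ` Bo p) \<in> a n ` Bo p"
      using finB[OF Suc.prems] Bne[OF Suc.prems False] by (intro Min_in) auto
    then obtain b where b: "b \<in> Bo p" "Min (a n ` Bo p) = a n b" by auto
    have "w \<in> Pos" "b \<in> Pos" using w b Wsub Bsub Suc.prems by auto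
    then show ?thesis using Suc.IH[of w] Suc.IH[of b] w b False by (simp add: gi_SF)
  qed (simp add: gi_T)
qed

lemma a_mono: "p \<in> Pos \<Longrightarrow> a n p \<le> a (Suc n) p"
proof (induction n arbitrary: p)
  case 0
  have "0 \<le> a (Suc 0) p" using a_bounds[OF 0] by blast
  then show ?case by (cases "T p") (simp_all add: gi_T gi_0F)
next
  case (Suc n)
  show ?case
  proof (cases "T p")
    case False
    have "Max (a n ` Wo p) \<le> Max (a (Suc n) ` Wo p)"
      using Max_mono_fun[OF finW[OF Suc.prems] Wne[OF Suc.prems False]] Suc.IH Wsub[OF Suc.prems] by blast
    moreover have "Min (a n ` Bo p) \<le> Min (a (Suc n) ` Bo p)"
      using Min_mono_fun[OF finB[OF Suc.prems] Bne[OF Suc.prems False]] Suc.IH Bsub[OF Suc.prems] by blast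
    ultimately show ?thesis using False by (simp add: gi_SF)
  qed (simp add: gi_T)
qed

lemma a_lim: assumes "p \<in> Pos" shows "(\<lambda>n. a n p) \<longlonglongrightarrow> v p"
proof -
  have "incseq (\<lambda>n. a n p)" using a_mono[OF assms] by (simp add: incseq_SucI)
  moreover have "bdd_above (range (\<lambda>n. a n p))" using a_bounds[OF assms] by (intro bdd_aboveI[where M=1]) auto
  ultimately have "(\<lambda>n. a n p) \<longlonglongrightarrow> (SUP n. a n p)" by (rule LIMSEQ_incseq_SUP[rotated])
  then show ?thesis unfolding v_def by (simp add: limI)
qed

lemma v_nonneg: "p \<in> Pos \<Longrightarrow> 0 \<le> v p"
  using a_lim LIMSEQ_le_const a_bounds by blast

lemma v_term: "p \<in> Pos \<Longrightarrow> T p \<Longrightarrow> v p = (if Wwin p then 1 else 0)"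
proof -
  assume "p \<in> Pos" "T p"
  then have "(\<lambda>n. a n p) = (\<lambda>n. if Wwin p then 1 else 0)" proof (intro ext)
    show "a n p = (if Wwin p then 1 else 0)" for n using \<open>T p\<close> by (simp add: gi_T)
  qed
  then have "(\<lambda>n. a n p) \<longlonglongrightarrow> (if Wwin p then 1 else 0)" by (simp only: tendsto_const)
  then show ?thesis by (rule LIMSEQ_unique[OF a_lim[OF \<open>p \<in> Pos\<close>]])
qed

lemma v_fix: assumes "p \<in> Pos" "\<not> T p"
  shows "v p = (Max (v ` Wo p) + Min (v ` Bo p)) / 2"
proof -
  have "(\<lambda>n. a (Suc n) p) \<longlonglongrightarrow> v p" using a_lim[OF assms(1)] by (rule LIMSEQ_Suc)
  moreover have "(\<lambda>n. a (Suc n) p) = (\<lambda>n. (Max (a n ` Wo p) + Min (a n ` Bo p)) / 2)"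
    using assms by (simp add: gi_SF)
  moreover have "(\<lambda>n. (Max (a n ` Wo p) + Min (a n ` Bo p)) / 2) \<longlonglongrightarrow> (Max (v ` Wo p) + Min (v ` Bo p)) / 2"
    apply (intro tendsto_intros tendsto_Max_finite tendsto_Min_finite finW finB Wne Bne assms a_lim)
    using Wsub Bsub assms by auto
  ultimately have L: "(\<lambda>n. (Max (a n ` Wo p) + Min (a n ` Bo p)) / 2) \<longlonglongrightarrow> v p" by simp
  show ?thesis by (rule LIMSEQ_unique[OF L]) fact
qed

lemma v_min:
  assumes gT: "\<And>p. p \<in> Pos \<Longrightarrow> T p \<Longrightarrow> g p = (if Wwin p then 1 else 0)"
    and gF: "\<And>p. p \<in> Pos \<Longrightarrow> \<not> T p \<Longrightarrow> g p = (Max (g ` Wo p) + Min (g ` Bo p)) / (2::real)"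
    and g0: "\<And>p. p \<in> Pos \<Longrightarrow> 0 \<le> g p"
    and p: "p \<in> Pos"
  shows "v p \<le> g p"
proof -
  have an: "a n q \<le> g q" if "q \<in> Pos" for n q
    using that
  proof (induction n arbitrary: q)
    case 0 then show ?case using gT g0 by (cases "T q") (simp_all add: gi_T gi_0F)
  next
    case (Suc n)
    show ?case
    proof (cases "T q")
      case False
      have "Max (a n ` Wo q) \<le> Max (g ` Wo q)"
        using Max_mono_fun[OF finW[OF Suc.prems] Wne[OF Suc.prems False]] Suc.IH Wsub[OF Suc.prems] by blast
      moreover have "Min (a n ` Bo q) \<le> Min (g ` Bo q)"
        using Min_mono_fun[OF finB[OF Suc.prems] Bne[OF Suc.prems False]] Suc.IH Bsub[OF Suc.prems] by blast
      moreover have "a (Suc n) q = (Max (a n ` Wo q) + Min (a n ` Bo q)) / 2"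
        using False by (simp add: gi_SF)
      ultimately have "a (Suc n) q \<le> (Max (g ` Wo q) + Min (g ` Bo q)) / 2" by (metis half_add_mono)
      also have "\<dots> = g q" by (rule gF[OF Suc.prems False, symmetric])
      finally show ?thesis .
    next
      case True
      then show ?thesis using gT[OF Suc.prems True] by (simp add: gi_T)
    qed
  qed
  show ?thesis by (rule LIMSEQ_le_const2[OF a_lim[OF p]]) (use an[OF p] in blast)
qed


lemma delta_exists:
  "\<exists>\<delta>>0. (\<forall>x\<in>Pos. \<forall>y\<in>Pos. v x \<noteq> v y \<longrightarrow> \<delta> \<le> \<bar>v x - v y\<bar>) \<and> (\<forall>x\<in>Pos. v x \<noteq> 0 \<longrightarrow> \<delta> \<le> \<bar>v x\<bar>)"
proof -
  define V where "V = insert 0 (v ` Pos)"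
  define D where "D = (\<lambda>(u, w). \<bar>u - w\<bar>) ` {uw \<in> V \<times> V. fst uw \<noteq> snd uw}"
  have finD: "finite D" unfolding D_def V_def using fin by auto
  have mem: "\<bar>u - w\<bar> \<in> D" if "u \<in> V" "w \<in> V" "u \<noteq> w" for u w
    unfolding D_def using that by (auto intro!: image_eqI[where x="(u, w)"])
  have pos: "e > 0" if "e \<in> D" for e using that unfolding D_def by auto
  show ?thesis
  proof (cases "D = {}")
    case True
    then show ?thesis using mem unfolding V_def by (intro exI[where x=1]) fastforce
  next
    case False
    have "Min D \<in> D" using finD False by (rule Min_in)
    then have "Min D > 0" by (rule pos)
    moreover have "Min D \<le> \<bar>u - w\<bar>" if "u \<in> V" "w \<in> V" "u \<noteq> w" for u w
      using Min_le[OF finD mem[OF that]] .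
    ultimately show ?thesis unfolding V_def
      by (intro exI[where x="Min D"]) (auto dest: spec[of _ 0] simp: image_iff, 
          metis abs_minus_commute diff_0 abs_minus_cancel insertI1 insertI2 imageI)
  qed
qed

lemma pert:
  assumes D1: "\<And>p. p \<in> Pos \<Longrightarrow> T p \<Longrightarrow> d p = 0"
    and D2: "\<And>p. p \<in> Pos \<Longrightarrow> v p = 0 \<Longrightarrow> d p = 0"
    and D3: "\<And>x y. x \<in> Pos \<Longrightarrow> y \<in> Pos \<Longrightarrow> v x = v y \<Longrightarrow> d x = d y"
    and D4: "\<And>p w b. p \<in> Pos \<Longrightarrow> \<not> T p \<Longrightarrow> w \<in> Wo p \<Longrightarrow> b \<in> Bo p \<Longrightarrow>
               v w = Max (v ` Wo p) \<Longrightarrow> v b = Min (v ` Bo p) \<Longrightarrow> 2 * d p = d w + d b"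
    and x: "x \<in> Pos"
  shows "d x = (0::real)"
proof -
  obtain \<delta> where \<delta>0: "\<delta> > 0"
    and \<delta>1: "\<And>x y. x \<in> Pos \<Longrightarrow> y \<in> Pos \<Longrightarrow> v x \<noteq> v y \<Longrightarrow> \<delta> \<le> \<bar>v x - v y\<bar>"
    and \<delta>2: "\<And>x. x \<in> Pos \<Longrightarrow> v x \<noteq> 0 \<Longrightarrow> \<delta> \<le> \<bar>v x\<bar>"
    using delta_exists by blast
  have key: "0 \<le> t * d x" if t: "\<And>y. y \<in> Pos \<Longrightarrow> \<bar>t * d y\<bar> < \<delta> / 2" for t
  proof -
    define g where "g = (\<lambda>y. v y + t * d y)"
    have tb: "- (\<delta>/2) < t * d y \<and> t * d y < \<delta>/2" if "y \<in> Pos" for y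
      using t[OF that] unfolding abs_less_iff by linarith
    have gT: "g p = (if Wwin p then 1 else 0)" if "p \<in> Pos" "T p" for p
      using that D1 v_term unfolding g_def by simp
    have g0: "0 \<le> g p" if "p \<in> Pos" for p
    proof (cases "v p = 0")
      case True then show ?thesis using D2[OF that] unfolding g_def by simp
    next
      case False
      then have "\<delta> \<le> v p" using \<delta>2[OF that] v_nonneg[OF that] by simp
      then show ?thesis using tb[OF that] unfolding g_def by simp
    qed
    have gF: "g p = (Max (g ` Wo p) + Min (g ` Bo p)) / 2" if p: "p \<in> Pos" "\<not> T p" for p
    proof -
      have "Max (v ` Wo p) \<in> v ` Wo p"
        using finW[OF p(1)] Wne[OF p] by (intro Max_in) auto
      then obtain w where w: "w \<in> Wo p" "v w = Max (v ` Wo p)" by auto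
      have "Min (v ` Bo p) \<in> v ` Bo p"
        using finB[OF p(1)] Bne[OF p] by (intro Min_in) auto
      then obtain b where b: "b \<in> Bo p" "v b = Min (v ` Bo p)" by auto
      have wP: "w \<in> Pos" and bP: "b \<in> Pos" using w b Wsub Bsub p by auto
      have "Max (g ` Wo p) = g w"
      proof (rule Max_eqI)
        show "finite (g ` Wo p)" using finW[OF p(1)] by simp
        show "g w \<in> g ` Wo p" using w by simp
        fix y assume "y \<in> g ` Wo p"
        then obtain u where u: "u \<in> Wo p" "y = g u" by auto
        have uP: "u \<in> Pos" using u Wsub p by auto
        have le: "v u \<le> v w" using w finW[OF p(1)] u by simp
        show "y \<le> g w"
        proof (cases "v u = v w")
          case True then show ?thesis using D3[OF uP wP] u unfolding g_def by simp
        next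
          case False
          then have "\<delta> \<le> v w - v u" using \<delta>1[OF uP wP] le by simp
          then show ?thesis using tb[OF uP] tb[OF wP] u unfolding g_def by simp
        qed
      qed
      moreover have "Min (g ` Bo p) = g b"
      proof (rule Min_eqI)
        show "finite (g ` Bo p)" using finB[OF p(1)] by simp
        show "g b \<in> g ` Bo p" using b by simp
        fix y assume "y \<in> g ` Bo p"
        then obtain u where u: "u \<in> Bo p" "y = g u" by auto
        have uP: "u \<in> Pos" using u Bsub p by auto
        have le: "v b \<le> v u" using b finB[OF p(1)] u by simp
        show "g b \<le> y"
        proof (cases "v u = v b")
          case True then show ?thesis using D3[OF uP bP] u unfolding g_def by simp
        next
          case False
          then have "\<delta> \<le> v u - v b" using \<delta>1[OF uP bP] le by simp
          then show ?thesis using tb[OF uP] tb[OF bP] u unfolding g_def by simp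
        qed
      qed
      moreover have "2 * d p = d w + d b" using D4[OF p w(1) b(1) w(2) b(2)] .
      moreover have "v p = (v w + v b) / 2" using v_fix[OF p] w b by simp
      ultimately show ?thesis unfolding g_def by (simp add: algebra_simps)
    qed
    have "v x \<le> g x" by (rule v_min[OF gT gF g0 x])
    then show ?thesis unfolding g_def by simp
  qed
  define S where "S = (\<Sum>y\<in>Pos. \<bar>d y\<bar>)"
  have S0: "0 \<le> S" unfolding S_def by (simp add: sum_nonneg)
  have Sy: "\<bar>d y\<bar> \<le> S" if "y \<in> Pos" for y
    unfolding S_def using fin that by (intro member_le_sum) auto
  define \<epsilon> where "\<epsilon> = \<delta> / (2 * (1 + S))"
  have \<epsilon>0: "\<epsilon> > 0" unfolding \<epsilon>_def using \<delta>0 S0 by simp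
  have \<epsilon>S: "\<epsilon> * (1 + S) = \<delta> / 2" unfolding \<epsilon>_def using S0 by (simp add: field_simps)
  have eb: "\<epsilon> * \<bar>d y\<bar> < \<delta> / 2" if "y \<in> Pos" for y
  proof -
    have "\<epsilon> * \<bar>d y\<bar> \<le> \<epsilon> * S" using Sy[OF that] \<epsilon>0 by (simp add: mult_left_mono)
    also have "\<dots> < \<epsilon> * (1 + S)" using \<epsilon>0 by simp
    finally show ?thesis using \<epsilon>S by simp
  qed
  have "0 \<le> \<epsilon> * d x" using key[of \<epsilon>] eb \<epsilon>0 by (simp add: abs_mult)
  moreover have "0 \<le> (- \<epsilon>) * d x" using key[of "- \<epsilon>"] eb \<epsilon>0 by (simp add: abs_mult)
  ultimately show ?thesis using \<epsilon>0 by (simp add: zero_le_mult_iff mult_le_0_iff)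
qed

lemma v_rat: assumes x: "x \<in> Pos" shows "v x \<in> \<rat>"
proof (rule ccontr)
  assume "v x \<notin> \<rat>"
  then obtain \<psi> :: "real \<Rightarrow> real" where add: "\<And>x y. \<psi> (x + y) = \<psi> x + \<psi> y"
    and \<psi>1: "\<psi> 1 = 0" and \<psi>a: "\<psi> (v x) = 1"
    using exists_psi by blast
  have \<psi>0: "\<psi> 0 = 0" using add[of 0 0] by simp
  have "\<psi> (v x) = 0"
  proof (rule pert[where d="\<lambda>y. \<psi> (v y)"])
    show "\<psi> (v p) = 0" if "p \<in> Pos" "T p" for p using v_term[OF that] \<psi>0 \<psi>1 by simp
    show "\<psi> (v p) = 0" if "p \<in> Pos" "v p = 0" for p using that \<psi>0 by simp
    show "\<psi> (v y) = \<psi> (v z)" if "v y = v z" for y z using that by simp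
    show "2 * \<psi> (v p) = \<psi> (v w) + \<psi> (v b)"
      if p: "p \<in> Pos" "\<not> T p" and wb: "w \<in> Wo p" "b \<in> Bo p" "v w = Max (v ` Wo p)" "v b = Min (v ` Bo p)"
      for p w b
    proof -
      have "v w + v b = v p + v p" using v_fix[OF p] wb by simp
      then have "\<psi> (v w + v b) = \<psi> (v p + v p)" by simp
      then show ?thesis using add[of "v w" "v b"] add[of "v p" "v p"] by linarith
    qed
  qed (rule x)
  then show False using \<psi>a by simp
qed

end

lemma beta_reflect:
  assumes "game Pos T Wo Bo" "p \<in> Pos"
  shows "game_iter 1 T Wwin Wo Bo n p = 1 - game_iter 0 T (\<lambda>p. \<not> Wwin p) Bo Wo n p"
  using assms(2)
proof (induction n arbitrary: p)
  case 0 then show ?case by (cases "T p") (simp_all add: gi_T gi_0F)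
next
  case (Suc n)
  interpret game Pos T Wwin Wo Bo by fact
  show ?case
  proof (cases "T p")
    case False
    let ?g = "game_iter 0 T (\<lambda>p. \<not> Wwin p) Bo Wo n"
    have "game_iter 1 T Wwin Wo Bo n ` Wo p = (\<lambda>x. 1 - ?g x) ` Wo p"
      using Suc.IH Wsub[OF Suc.prems] by (intro image_cong) auto
    moreover have "game_iter 1 T Wwin Wo Bo n ` Bo p = (\<lambda>x. 1 - ?g x) ` Bo p"
      using Suc.IH Bsub[OF Suc.prems] by (intro image_cong) auto
    ultimately show ?thesis using False
      Max_one_minus[OF finW[OF Suc.prems] Wne[OF Suc.prems False], of ?g]
      Min_one_minus[OF finB[OF Suc.prems] Bne[OF Suc.prems False], of ?g]
      by (simp add: gi_SF field_simps)
  qed (simp add: gi_T)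
qed

theorem proposition1:
  fixes Pos :: "'p set" and T Wwin :: "'p \<Rightarrow> bool" and Wo Bo :: "'p \<Rightarrow> 'p set"
  assumes "finite Pos"
    and "\<And>p. p \<in> Pos \<Longrightarrow> Wo p \<subseteq> Pos"
    and "\<And>p. p \<in> Pos \<Longrightarrow> Bo p \<subseteq> Pos"
    and "\<And>p. p \<in> Pos \<Longrightarrow> \<not> T p \<Longrightarrow> Wo p \<noteq> {}"
    and "\<And>p. p \<in> Pos \<Longrightarrow> \<not> T p \<Longrightarrow> Bo p \<noteq> {}"
    and "P \<in> Pos"
  shows "alpha T Wwin Wo Bo P \<in> \<rat> \<and> beta T Wwin Wo Bo P \<in> \<rat>"
proof -
  interpret G: game Pos T Wwin Wo Bo using assms by unfold_locales auto
  interpret H: game Pos T "\<lambda>p. \<not> Wwin p" Bo Wo using assms by unfold_locales auto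
  have a: "alpha T Wwin Wo Bo P = G.v P" unfolding alpha_def alpha_n_def G.v_def ..
  have "(\<lambda>n. beta_n T Wwin Wo Bo n P) = (\<lambda>n. 1 - H.a n P)"
    unfolding beta_n_def using beta_reflect[OF G.game_axioms assms(6)] by simp
  moreover have "(\<lambda>n. 1 - H.a n P) \<longlonglongrightarrow> 1 - H.v P"
    by (intro tendsto_intros H.a_lim assms(6))
  ultimately have "beta T Wwin Wo Bo P = 1 - H.v P" unfolding beta_def by (simp add: limI)
  then show ?thesis using a G.v_rat[OF assms(6)] H.v_rat[OF assms(6)] by simp
qed

end
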